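(* Each of the following classes of matroids is closed under two-sums (i.e. if $\mathcal{L}$ and $\mathcal{M}$ belong to the class and the two-sum $\mathcal{L}\oplus_g\mathcal{M}$ is defined, then $\mathcal{L}\oplus_g\mathcal{M}$ belongs to the class): (a) $\mathbf{B}$-Rayleigh matroids; (b) $\mathbf{I}$-Rayleigh matroids; (c) $\mathbf{S}$-Rayleigh matroids; (d) Potts-Rayleigh matroids.
   Context: For a finite set $E$ and a multiaffine polynomial $Z$ in indeterminates $\mathbf{y}=\{y_e:e\in E\}$ with nonnegative coefficients, not identically zero, let $\Delta Z\{e,f\}=Z_eZ_f-Z_{ef}Z$ where subscripts denote partial derivatives; $Z$ is Rayleigh if $\Delta Z\{e,f\}(\mathbf{y})\ge0$ for all distinct $e,f\in E$ and all $\mathbf{y}$ with all $y_c>0$. For a family $\mathcal{Q}$ of subsets of $E$ let $Z(\mathcal{Q};\mathbf{y})=\sum_{S\in\mathcal{Q}}\prod_{e\in S}y_e$. For a matroid $\mathcal{M}$ on $E$, let $\mathbf{B}\mathcal{M},\mathbf{I}\mathcal{M},\mathbf{S}\mathcal{M}$ be its sets of bases, independent sets and spanning sets; $\mathcal{M}$ is $\mathbf{B}$-Rayleigh (resp. $\mathbf{I}$-, $\mathbf{S}$-Rayleigh) if $Z(\mathbf{B}\mathcal{M};\mathbf{y})$ (resp. $Z(\mathbf{I}\mathcal{M};\mathbf{y})$, $Z(\mathbf{S}\mathcal{M};\mathbf{y})$) is Rayleigh. The Potts model partition function is $Z(\mathcal{M},q;\mathbf{y})=\sum_{S\subseteq E}q^{-\mathrm{rank}_{\mathcal{M}}(S)}\mathbf{y}^S$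 for real $q>0$; $\mathcal{M}$ is Potts-Rayleigh if there is $q_*>0$ such that $Z(\mathcal{M},q;\mathbf{y})$ is Rayleigh for all $0<q\le q_*$. Two-sum: let $\mathcal{L},\mathcal{M}$ be matroids with $E(\mathcal{L})\cap E(\mathcal{M})=\{g\}$, $g$ neither a loop nor a coloop in $\mathcal{L}$ or in $\mathcal{M}$. Then $\mathcal{N}=\mathcal{L}\oplus_g\mathcal{M}$ is the matroid on $E(\mathcal{L})\cup E(\mathcal{M})\setminus\{g\}$ with rank function $\mathrm{rank}_{\mathcal{N}}(S)=\mathrm{rank}_{\mathcal{L}}(S\cap E(\mathcal{L}))+\mathrm{rank}_{\mathcal{M}}(S\cap E(\mathcal{M}))-\nu(S)$, where $\nu(S)=1$ if $g$ lies in the closure (in $\mathcal{L}$) of $S\cap E(\mathcal{L})$ and in the closure (in $\mathcal{M}$) of $S\cap E(\mathcal{M})$, and $\nu(S)=0$ otherwise. *)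

theory Defs
  imports Complex_Main
begin

text \<open>A matroid on the finite ground set E is given by its rank function r
(only values on subsets of E matter), satisfying the rank axioms.\<close>

definition matroid :: "'a set \<Rightarrow> ('a set \<Rightarrow> nat) \<Rightarrow> bool" where
  "matroid E r \<longleftrightarrow> finite E
     \<and> (\<forall>S. S \<subseteq> E \<longrightarrow> r S \<le> card S)
     \<and> (\<forall>S T. S \<subseteq> T \<and> T \<subseteq> E \<longrightarrow> r S \<le> r T)
     \<and> (\<forall>S T. S \<subseteq> E \<and> T \<subseteq> E \<longrightarrow> r (S \<union> T) + r (S \<inter> T) \<le> r S + r T)"

definition indeps :: "'a set \<Rightarrow> ('a set \<Rightarrow> nat) \<Rightarrow> 'a set set" where
  "indeps E r = {S. S \<subseteq> E \<and> r S = card S}"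

definition bases :: "'a set \<Rightarrow> ('a set \<Rightarrow> nat) \<Rightarrow> 'a set set" where
  "bases E r = {S. S \<subseteq> E \<and> r S = card S \<and> r S = r E}"

definition spannings :: "'a set \<Rightarrow> ('a set \<Rightarrow> nat) \<Rightarrow> 'a set set" where
  "spannings E r = {S. S \<subseteq> E \<and> r S = r E}"

definition closure_m :: "'a set \<Rightarrow> ('a set \<Rightarrow> nat) \<Rightarrow> 'a set \<Rightarrow> 'a set" where
  "closure_m E r S = {e \<in> E. r (insert e S) = r S}"

definition is_loop :: "'a set \<Rightarrow> ('a set \<Rightarrow> nat) \<Rightarrow> 'a \<Rightarrow> bool" where
  "is_loop E r g \<longleftrightarrow> g \<in> E \<and> r {g} = 0"

definition is_coloop :: "'a set \<Rightarrow> ('a set \<Rightarrow> nat) \<Rightarrow> 'a \<Rightarrow> bool" where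
  "is_coloop E r g \<longleftrightarrow> g \<in> E \<and> r (E - {g}) < r E"

text \<open>A multiaffine polynomial in the indeterminates y_e (e in E) is given by its
coefficient function c on subsets of E:  Z(y) = sum over S of c S * y^S.
Partial derivatives are the formal ones.\<close>

definition mpoly_eval :: "'a set \<Rightarrow> ('a set \<Rightarrow> real) \<Rightarrow> ('a \<Rightarrow> real) \<Rightarrow> real" where
  "mpoly_eval E c y = (\<Sum>S\<in>Pow E. c S * (\<Prod>e\<in>S. y e))"

definition mpoly_d1 :: "'a set \<Rightarrow> ('a set \<Rightarrow> real) \<Rightarrow> 'a \<Rightarrow> ('a \<Rightarrow> real) \<Rightarrow> real" where
  "mpoly_d1 E c e y = (\<Sum>S\<in>{S\<in>Pow E. e \<in> S}. c S * (\<Prod>x\<in>S - {e}. y x))"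

definition mpoly_d2 :: "'a set \<Rightarrow> ('a set \<Rightarrow> real) \<Rightarrow> 'a \<Rightarrow> 'a \<Rightarrow> ('a \<Rightarrow> real) \<Rightarrow> real" where
  "mpoly_d2 E c e f y = (\<Sum>S\<in>{S\<in>Pow E. e \<in> S \<and> f \<in> S}. c S * (\<Prod>x\<in>S - {e, f}. y x))"

definition rayleigh :: "'a set \<Rightarrow> ('a set \<Rightarrow> real) \<Rightarrow> bool" where
  "rayleigh E c \<longleftrightarrow>
     (\<forall>S\<subseteq>E. 0 \<le> c S) \<and> (\<exists>S\<subseteq>E. c S \<noteq> 0) \<and>
     (\<forall>e\<in>E. \<forall>f\<in>E. e \<noteq> f \<longrightarrow> (\<forall>y. (\<forall>x\<in>E. 0 < y x) \<longrightarrow>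
        0 \<le> mpoly_d1 E c e y * mpoly_d1 E c f y - mpoly_d2 E c e f y * mpoly_eval E c y))"

text \<open>Generating polynomial Z(Q;y) of a family Q of subsets.\<close>
definition family_coeff :: "'a set set \<Rightarrow> 'a set \<Rightarrow> real" where
  "family_coeff Q S = (if S \<in> Q then 1 else 0)"

definition B_rayleigh :: "'a set \<Rightarrow> ('a set \<Rightarrow> nat) \<Rightarrow> bool" where
  "B_rayleigh E r \<longleftrightarrow> matroid E r \<and> rayleigh E (family_coeff (bases E r))"

definition I_rayleigh :: "'a set \<Rightarrow> ('a set \<Rightarrow> nat) \<Rightarrow> bool" where
  "I_rayleigh E r \<longleftrightarrow> matroid E r \<and> rayleigh E (family_coeff (indeps E r))"

definition S_rayleigh :: "'a set \<Rightarrow> ('a set \<Rightarrow> nat) \<Rightarrow> bool" where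
  "S_rayleigh E r \<longleftrightarrow> matroid E r \<and> rayleigh E (family_coeff (spannings E r))"

definition potts_coeff :: "('a set \<Rightarrow> nat) \<Rightarrow> real \<Rightarrow> 'a set \<Rightarrow> real" where
  "potts_coeff r q S = q powr (- real (r S))"

definition potts_rayleigh :: "'a set \<Rightarrow> ('a set \<Rightarrow> nat) \<Rightarrow> bool" where
  "potts_rayleigh E r \<longleftrightarrow> matroid E r \<and>
     (\<exists>qs>0. \<forall>q. 0 < q \<and> q \<le> qs \<longrightarrow> rayleigh E (potts_coeff r q))"

definition two_sum_defined ::
  "'a set \<Rightarrow> ('a set \<Rightarrow> nat) \<Rightarrow> 'a set \<Rightarrow> ('a set \<Rightarrow> nat) \<Rightarrow> 'a \<Rightarrow> bool" where
  "two_sum_defined EL rL EM rM g \<longleftrightarrow> EL \<inter> EM = {g}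
     \<and> \<not> is_loop EL rL g \<and> \<not> is_coloop EL rL g
     \<and> \<not> is_loop EM rM g \<and> \<not> is_coloop EM rM g"

definition two_sum_ground :: "'a set \<Rightarrow> 'a set \<Rightarrow> 'a \<Rightarrow> 'a set" where
  "two_sum_ground EL EM g = (EL \<union> EM) - {g}"

definition two_sum_rank ::
  "'a set \<Rightarrow> ('a set \<Rightarrow> nat) \<Rightarrow> 'a set \<Rightarrow> ('a set \<Rightarrow> nat) \<Rightarrow> 'a \<Rightarrow> 'a set \<Rightarrow> nat" where
  "two_sum_rank EL rL EM rM g S =
     rL (S \<inter> EL) + rM (S \<inter> EM)
     - (if g \<in> closure_m EL rL (S \<inter> EL) \<and> g \<in> closure_m EM rM (S \<inter> EM) then 1 else 0)"

end

theory Submission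
  imports Defs
begin


definition mp :: "'a set \<Rightarrow> ('a set \<Rightarrow> real) \<Rightarrow> 'a set \<Rightarrow> ('a \<Rightarrow> real) \<Rightarrow> real" where
  "mp E c R y = (\<Sum>S\<in>Pow E. if R \<subseteq> S then c S * (\<Prod>x\<in>S - R. y x) else 0)"

lemma eval_mp: "mpoly_eval E c y = mp E c {} y"
  by (simp add: mpoly_eval_def mp_def)

lemma d1_mp: "finite E \<Longrightarrow> mpoly_d1 E c e y = mp E c {e} y"
  unfolding mpoly_d1_def mp_def by (subst sum.inter_filter) auto

lemma d2_mp: "finite E \<Longrightarrow> mpoly_d2 E c e f y = mp E c {e,f} y"
  unfolding mpoly_d2_def mp_def by (subst sum.inter_filter) auto

lemma sum_Pow_Un:
  fixes F G :: "'a set \<Rightarrow> real"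
  assumes "finite A" "finite B" "A \<inter> B = {}"
  shows "(\<Sum>S\<in>Pow (A \<union> B). F (S \<inter> A) * G (S \<inter> B)) = (\<Sum>S\<in>Pow A. F S) * (\<Sum>S\<in>Pow B. G S)"
proof -
  have bij: "bij_betw (\<lambda>S. (S \<inter> A, S \<inter> B)) (Pow (A \<union> B)) (Pow A \<times> Pow B)"
    by (rule bij_betw_byWitness[where f'="\<lambda>(S1,S2). S1 \<union> S2"]) (use assms in auto)
  have "(\<Sum>S\<in>Pow (A \<union> B). F (S \<inter> A) * G (S \<inter> B))
      = (\<Sum>S\<in>Pow (A \<union> B). (\<lambda>(S1,S2). F S1 * G S2) (S \<inter> A, S \<inter> B))" by simp
  also have "\<dots> = (\<Sum>p\<in>Pow A \<times> Pow B. (\<lambda>(S1,S2). F S1 * G S2) p)"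
    by (rule sum.reindex_bij_betw[OF bij])
  also have "\<dots> = (\<Sum>S\<in>Pow A. F S) * (\<Sum>S\<in>Pow B. G S)"
    by (simp add: sum.cartesian_product' sum_product)
  finally show ?thesis .
qed

lemma mp_tensor:
  assumes "finite A" "finite B" "A \<inter> B = {}" "R1 \<subseteq> A" "R2 \<subseteq> B"
  shows "mp (A \<union> B) (\<lambda>S. a (S \<inter> A) * b (S \<inter> B)) (R1 \<union> R2) y = mp A a R1 y * mp B b R2 y"
proof -
  have "mp A a R1 y * mp B b R2 y =
    (\<Sum>S\<in>Pow (A \<union> B). (\<lambda>S1. if R1 \<subseteq> S1 then a S1 * (\<Prod>x\<in>S1 - R1. y x) else 0) (S \<inter> A) *
        (\<lambda>S2. if R2 \<subseteq> S2 then b S2 * (\<Prod>x\<in>S2 - R2. y x) else 0) (S \<inter> B))"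
    unfolding mp_def by (rule sum_Pow_Un[OF assms(1-3), symmetric])
  also have "\<dots> = mp (A \<union> B) (\<lambda>S. a (S \<inter> A) * b (S \<inter> B)) (R1 \<union> R2) y"
    unfolding mp_def
  proof (rule sum.cong[OF refl])
    fix S assume S: "S \<in> Pow (A \<union> B)"
    have fin: "finite S" using S assms(1,2) by (meson PowD finite_Un finite_subset)
    have eq: "S - (R1 \<union> R2) = (S \<inter> A - R1) \<union> (S \<inter> B - R2)" using S assms by auto
    have "(\<Prod>x\<in>S - (R1 \<union> R2). y x) = (\<Prod>x\<in>S \<inter> A - R1. y x) * (\<Prod>x\<in>S \<inter> B - R2. y x)"
      unfolding eq by (rule prod.union_disjoint) (use fin assms in auto)
    moreover have "(R1 \<union> R2 \<subseteq> S) = (R1 \<subseteq> S \<inter> A \<and> R2 \<subseteq> S \<inter> B)" using assms by auto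
    ultimately show "(if R1 \<subseteq> S \<inter> A then a (S \<inter> A) * (\<Prod>x\<in>S \<inter> A - R1. y x) else 0) *
          (if R2 \<subseteq> S \<inter> B then b (S \<inter> B) * (\<Prod>x\<in>S \<inter> B - R2. y x) else 0) =
         (if R1 \<union> R2 \<subseteq> S then a (S \<inter> A) * b (S \<inter> B) * (\<Prod>x\<in>S - (R1 \<union> R2). y x) else 0)"
      by simp
  qed
  finally show ?thesis by simp
qed

lemma mp_cong: "(\<And>S. S \<subseteq> E \<Longrightarrow> c S = c' S) \<Longrightarrow> mp E c R y = mp E c' R y"
  unfolding mp_def by (rule sum.cong) auto

lemma mp_add: "mp E (\<lambda>S. c1 S + c2 S) R y = mp E c1 R y + mp E c2 R y"
  unfolding mp_def sum.distrib[symmetric] by (rule sum.cong) (auto simp: algebra_simps)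

lemma mp_diff: "mp E (\<lambda>S. c1 S - c2 S) R y = mp E c1 R y - mp E c2 R y"
  unfolding mp_def sum_subtractf[symmetric] by (rule sum.cong) (auto simp: algebra_simps)

lemma mp_scale: "mp E (\<lambda>S. k * c S) R y = k * mp E c R y"
  unfolding mp_def sum_distrib_left by (rule sum.cong) (auto simp: algebra_simps)

lemma mp_nonneg: "(\<And>S. S \<subseteq> E \<Longrightarrow> 0 \<le> c S) \<Longrightarrow> (\<And>x. x \<in> E \<Longrightarrow> 0 \<le> y x) \<Longrightarrow> 0 \<le> mp E c R y"
  unfolding mp_def by (intro sum_nonneg) (auto intro!: mult_nonneg_nonneg prod_nonneg)

lemma mp_upd: "g \<notin> A \<Longrightarrow> mp A c R (y(g := t)) = mp A c R y"
  unfolding mp_def by (intro sum.cong refl if_cong arg_cong[where f="\<lambda>u. c _ * u"] prod.cong) auto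


lemma mp_single:
  "mp {g} (\<lambda>T. if g \<in> T then 0 else 1) {} y = 1"
  "mp {g} (\<lambda>T. if g \<in> T then 1 else 0) {} y = y g"
  "mp {g} (\<lambda>T. if g \<in> T then 0 else 1) {g} y = 0"
  "mp {g} (\<lambda>T. if g \<in> T then 1 else 0) {g} y = 1"
  by (simp_all add: mp_def Pow_insert)

lemma mp_ins_split:
  assumes "finite A" "g \<notin> A" "R \<subseteq> A" "R2 \<subseteq> {g}"
  shows "mp (insert g A) c (R \<union> R2) y =
     mp A c R y * mp {g} (\<lambda>T. if g \<in> T then 0 else 1) R2 y
     + mp A (\<lambda>S. c (insert g S)) R y * mp {g} (\<lambda>T. if g \<in> T then 1 else 0) R2 y"
proof -
  define u0 :: "'a set \<Rightarrow> real" where "u0 = (\<lambda>T. if g \<in> T then 0 else 1)"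
  define u1 :: "'a set \<Rightarrow> real" where "u1 = (\<lambda>T. if g \<in> T then 1 else 0)"
  define c1 where "c1 = (\<lambda>S. c (insert g S))"
  have eqA: "insert g A = A \<union> {g}" by auto
  have "mp (insert g A) c (R \<union> R2) y = mp (A \<union> {g}) (\<lambda>S. c (S \<inter> A) * u0 (S \<inter> {g})
      + c1 (S \<inter> A) * u1 (S \<inter> {g})) (R \<union> R2) y"
    unfolding eqA
  proof (rule mp_cong)
    fix S assume S: "S \<subseteq> A \<union> {g}"
    show "c S = c (S \<inter> A) * u0 (S \<inter> {g}) + c1 (S \<inter> A) * u1 (S \<inter> {g})"
    proof (cases "g \<in> S")
      case True
      then have "insert g (S \<inter> A) = S" using S by auto
      then show ?thesis using True by (simp add: u0_def u1_def c1_def)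
    next
      case False
      then have "S \<inter> A = S" using S by auto
      then show ?thesis using False by (simp add: u0_def u1_def c1_def)
    qed
  qed
  also have "\<dots> = mp A c R y * mp {g} u0 R2 y + mp A c1 R y * mp {g} u1 R2 y"
  proof -
    have d: "A \<inter> {g} = {}" using assms by auto
    show ?thesis unfolding mp_add mp_tensor[OF assms(1) finite.intros(2)[OF finite.intros(1)] d assms(3) assms(4)] ..
  qed
  finally show ?thesis unfolding u0_def u1_def c1_def .
qed

lemma mp_ins:
  assumes "finite A" "g \<notin> A" "R \<subseteq> A"
  shows "mp (insert g A) c R y = mp A c R y + y g * mp A (\<lambda>S. c (insert g S)) R y"
    and "mp (insert g A) c (insert g R) y = mp A (\<lambda>S. c (insert g S)) R y"
  using mp_ins_split[OF assms, of "{}" c y] mp_ins_split[OF assms, of "{g}" c y]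
  by (simp_all add: mp_single)


lemma mp_N:
  assumes "finite A" "finite B" "A \<inter> B = {}" "R1 \<subseteq> A" "R2 \<subseteq> B"
  and cN: "\<And>S. S \<subseteq> A \<union> B \<Longrightarrow> cN S = k * (cL (S \<inter> A) * cM (insert g (S \<inter> B))
       + cL (insert g (S \<inter> A)) * cM (S \<inter> B) - \<alpha> * (cL (S \<inter> A) * cM (S \<inter> B))
       - \<gamma> * (cL (insert g (S \<inter> A)) * cM (insert g (S \<inter> B))))"
  shows "mp (A \<union> B) cN (R1 \<union> R2) y = k * (mp A cL R1 y * mp B (\<lambda>S. cM (insert g S)) R2 y
     + mp A (\<lambda>S. cL (insert g S)) R1 y * mp B cM R2 y - \<alpha> * (mp A cL R1 y * mp B cM R2 y)
     - \<gamma> * (mp A (\<lambda>S. cL (insert g S)) R1 y * mp B (\<lambda>S. cM (insert g S)) R2 y))"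
proof -
  define cL1 where "cL1 = (\<lambda>S. cL (insert g S))"
  define cM1 where "cM1 = (\<lambda>S. cM (insert g S))"
  note T = mp_tensor[OF assms(1-5)]
  have t1: "mp (A \<union> B) (\<lambda>S. cL (S \<inter> A) * cM1 (S \<inter> B)) (R1 \<union> R2) y = mp A cL R1 y * mp B cM1 R2 y" by (rule T)
  have t2: "mp (A \<union> B) (\<lambda>S. cL1 (S \<inter> A) * cM (S \<inter> B)) (R1 \<union> R2) y = mp A cL1 R1 y * mp B cM R2 y" by (rule T)
  have t3: "mp (A \<union> B) (\<lambda>S. cL (S \<inter> A) * cM (S \<inter> B)) (R1 \<union> R2) y = mp A cL R1 y * mp B cM R2 y" by (rule T)
  have t4: "mp (A \<union> B) (\<lambda>S. cL1 (S \<inter> A) * cM1 (S \<inter> B)) (R1 \<union> R2) y = mp A cL1 R1 y * mp B cM1 R2 y" by (rule T)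
  have "mp (A \<union> B) cN (R1 \<union> R2) y = mp (A \<union> B) (\<lambda>S. k * (cL (S \<inter> A) * cM1 (S \<inter> B)
       + cL1 (S \<inter> A) * cM (S \<inter> B) - \<alpha> * (cL (S \<inter> A) * cM (S \<inter> B))
       - \<gamma> * (cL1 (S \<inter> A) * cM1 (S \<inter> B)))) (R1 \<union> R2) y"
    by (rule mp_cong) (simp add: cN cL1_def cM1_def)
  also have "\<dots> = k * (mp A cL R1 y * mp B cM1 R2 y
     + mp A cL1 R1 y * mp B cM R2 y - \<alpha> * (mp A cL R1 y * mp B cM R2 y)
     - \<gamma> * (mp A cL1 R1 y * mp B cM1 R2 y))"
    unfolding mp_scale mp_diff mp_add t1 t2 t3 t4 ..
  finally show ?thesis unfolding cL1_def cM1_def .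
qed


lemma quad_a:
  fixes a b c :: real
  assumes h: "\<forall>t>0. 0 \<le> a + b*t + c*t^2"
  shows "0 \<le> a"
proof (rule ccontr)
  assume "\<not> 0 \<le> a" hence a: "a < 0" by simp
  define M where "M = \<bar>b\<bar> + \<bar>c\<bar> + 1"
  have M: "M > 0" unfolding M_def by simp
  define t where "t = min 1 (-a/(2*M))"
  have t0: "t > 0" using a M by (simp add: t_def divide_neg_pos)
  have t1: "t \<le> 1" by (simp add: t_def)
  have t2: "t \<le> -a/(2*M)" by (simp add: t_def)
  have f1: "M * t \<le> -a/2" using t2 M by (simp add: field_simps)
  have f2: "b*t \<le> \<bar>b\<bar>*t" using t0 by (intro mult_right_mono) auto
  have f3: "c*t^2 \<le> \<bar>c\<bar>*t"
  proof -
    have "c*t^2 \<le> \<bar>c\<bar>*t^2" using t0 by (simp add: mult_right_mono)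
    also have "\<dots> \<le> \<bar>c\<bar>*t" using t0 t1 by (simp add: mult_left_mono power2_eq_square)
    finally show ?thesis .
  qed
  have "a + b*t + c*t^2 \<le> a/2" using f1 f2 f3 t0 unfolding M_def by (simp only: distrib_right)
  with h t0 a show False by fastforce
qed

lemma quad_c:
  fixes a b c :: real
  assumes h: "\<forall>t>0. 0 \<le> a + b*t + c*t^2"
  shows "0 \<le> c"
proof -
  have "\<forall>s>0. 0 \<le> c + b*s + a*s^2"
  proof (intro allI impI)
    fix s :: real assume s: "s > 0"
    have "1/s > 0" using s by simp
    then have "0 \<le> a + b*(1/s) + c*(1/s)^2" using h by blast
    then have "0 \<le> s^2 * (a + b*(1/s) + c*(1/s)^2)" by simp
    also have "s^2 * (a + b*(1/s) + c*(1/s)^2) = c + b*s + a*s^2" using s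
      by (simp add: field_simps power2_eq_square)
    finally show "0 \<le> c + b*s + a*s^2" .
  qed
  then show ?thesis by (rule quad_a)
qed

lemma quad:
  fixes a b c X W :: real
  assumes h: "\<forall>t>0. 0 \<le> a + b*t + c*t^2" and X: "0 \<le> X" and W: "0 \<le> W"
  shows "0 \<le> a*X^2 + b*X*W + c*W^2"
proof (cases "X = 0")
  case True then show ?thesis using quad_c[OF h] by simp
next
  case False
  then have X': "X > 0" using X by simp
  show ?thesis
  proof (cases "W = 0")
    case True then show ?thesis using quad_a[OF h] by simp
  next
    case False
    then have "W/X > 0" using X' W by simp
    then have "0 \<le> a + b*(W/X) + c*(W/X)^2" using h by blast
    then have "0 \<le> X^2 * (a + b*(W/X) + c*(W/X)^2)" by simp
    also have "X^2 * (a + b*(W/X) + c*(W/X)^2) = a*X^2 + b*X*W + c*W^2" using X'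
      by (simp add: field_simps power2_eq_square)
    finally show ?thesis .
  qed
qed

lemma same_side_alg:
  fixes pe pf pef p0 qe qf qef q0 X W k :: real
  assumes h: "\<forall>t>0. 0 \<le> (pe + t*qe)*(pf + t*qf) - (pef + t*qef)*(p0 + t*q0)"
    and X: "0 \<le> X" and W: "0 \<le> W"
  shows "0 \<le> (k*(pe*X + qe*W))*(k*(pf*X + qf*W)) - (k*(pef*X + qef*W))*(k*(p0*X+q0*W))"
proof -
  have "\<forall>t>0. 0 \<le> (pe*pf - pef*p0) + (pe*qf + qe*pf - pef*q0 - qef*p0)*t + (qe*qf - qef*q0)*t^2"
    using h by (simp add: algebra_simps power2_eq_square)
  from quad[OF this X W]
  have "0 \<le> k^2 * ((pe*pf - pef*p0)*X^2 + (pe*qf + qe*pf - pef*q0 - qef*p0)*X*W + (qe*qf - qef*q0)*W^2)"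
    by simp
  also have "\<dots> = (k*(pe*X + qe*W))*(k*(pf*X + qf*W)) - (k*(pef*X + qef*W))*(k*(p0*X+q0*W))"
    by (simp add: algebra_simps power2_eq_square)
  finally show ?thesis .
qed

lemma cross_alg:
  fixes P Q Pe Qe P' Q' Pf' Qf' k \<alpha> \<gamma> :: real
  assumes "0 \<le> Pe*Q - Qe*P" "0 \<le> Pf'*Q' - Qf'*P'" "\<alpha>*\<gamma> \<le> 1"
  shows "0 \<le> (k*(Pe*Q' + Qe*P' - \<alpha>*(Pe*P') - \<gamma>*(Qe*Q'))) * (k*(P*Qf' + Q*Pf' - \<alpha>*(P*Pf') - \<gamma>*(Q*Qf')))
     - (k*(Pe*Qf' + Qe*Pf' - \<alpha>*(Pe*Pf') - \<gamma>*(Qe*Qf'))) * (k*(P*Q' + Q*P' - \<alpha>*(P*P') - \<gamma>*(Q*Q')))"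
proof -
  have "0 \<le> k^2 * (1 - \<alpha>*\<gamma>) * ((Pe*Q - Qe*P) * (Pf'*Q' - Qf'*P'))"
    using assms by (intro mult_nonneg_nonneg) auto
  also have "\<dots> = (k*(Pe*Q' + Qe*P' - \<alpha>*(Pe*P') - \<gamma>*(Qe*Q'))) * (k*(P*Qf' + Q*Pf' - \<alpha>*(P*Pf') - \<gamma>*(Q*Qf')))
     - (k*(Pe*Qf' + Qe*Pf' - \<alpha>*(Pe*Pf') - \<gamma>*(Qe*Qf'))) * (k*(P*Q' + Q*P' - \<alpha>*(P*P') - \<gamma>*(Q*Q')))"
    by (simp add: algebra_simps power2_eq_square)
  finally show ?thesis .
qed


lemma arith_B:
  fixes x xg y yg c1 c2 RL RM :: nat
  assumes "xg = x \<or> xg = Suc x" "yg = y \<or> yg = Suc y" "1 \<le> xg" "1 \<le> yg" "x \<le> c1" "y \<le> c2" "xg \<le> RL" "yg \<le> RM"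
  shows "(if x + y - (if xg = x \<and> yg = y then 1 else 0) = c1 + c2 \<and> x + y - (if xg = x \<and> yg = y then 1 else 0) = RL + RM - 1 then 1 else 0 :: real)
    = 1 * ((if x = c1 \<and> x = RL then 1 else 0) * (if yg = Suc c2 \<and> yg = RM then 1 else 0)
         + (if xg = Suc c1 \<and> xg = RL then 1 else 0) * (if y = c2 \<and> y = RM then 1 else 0)
         - 0 * ((if x = c1 \<and> x = RL then 1 else 0) * (if y = c2 \<and> y = RM then 1 else 0))
         - 0 * ((if xg = Suc c1 \<and> xg = RL then 1 else 0) * (if yg = Suc c2 \<and> yg = RM then 1 else 0)))"
  using assms by auto

lemma arith_I:
  fixes x xg y yg c1 c2 :: nat
  assumes "xg = x \<or> xg = Suc x" "yg = y \<or> yg = Suc y" "1 \<le> xg" "1 \<le> yg" "x \<le> c1" "y \<le> c2"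
  shows "(if x + y - (if xg = x \<and> yg = y then 1 else 0) = c1 + c2 then 1 else 0 :: real)
    = 1 * ((if x = c1 then 1 else 0) * (if yg = Suc c2 then 1 else 0)
         + (if xg = Suc c1 then 1 else 0) * (if y = c2 then 1 else 0)
         - 0 * ((if x = c1 then 1 else 0) * (if y = c2 then 1 else 0))
         - 1 * ((if xg = Suc c1 then 1 else 0) * (if yg = Suc c2 then 1 else 0)))"
  using assms by auto

lemma arith_S:
  fixes x xg y yg RL RM :: nat
  assumes "xg = x \<or> xg = Suc x" "yg = y \<or> yg = Suc y" "1 \<le> xg" "1 \<le> yg" "xg \<le> RL" "yg \<le> RM"
  shows "(if x + y - (if xg = x \<and> yg = y then 1 else 0) = RL + RM - 1 then 1 else 0 :: real)
    = 1 * ((if x = RL then 1 else 0) * (if yg = RM then 1 else 0)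
         + (if xg = RL then 1 else 0) * (if y = RM then 1 else 0)
         - 1 * ((if x = RL then 1 else 0) * (if y = RM then 1 else 0))
         - 0 * ((if xg = RL then 1 else 0) * (if yg = RM then 1 else 0)))"
  using assms by auto

lemma powr_nat_neg: "0 < q \<Longrightarrow> q powr (- real n) = (1/q) ^ n"
  by (simp add: powr_minus powr_realpow power_one_over inverse_eq_divide)

lemma arith_P:
  fixes x xg y yg :: nat and q :: real
  assumes "xg = x \<or> xg = Suc x" "yg = y \<or> yg = Suc y" "1 \<le> xg" "1 \<le> yg" "0 < q" "q < 1"
  shows "q powr (- real (x + y - (if xg = x \<and> yg = y then 1 else 0)))
    = q / (1 - q) * (q powr (- real x) * q powr (- real yg) + q powr (- real xg) * q powr (- real y)
       - 1 * (q powr (- real x) * q powr (- real y)) - q * (q powr (- real xg) * q powr (- real yg)))"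
proof -
  define u where "u = 1/q"
  have u: "u > 1" using assms unfolding u_def by simp
  have qu: "q = 1/u" using assms unfolding u_def by simp
  have k: "q / (1 - q) = 1 / (u - 1)" using u unfolding qu by (simp add: field_simps)
  note P = powr_nat_neg[OF assms(5)]
  have "u ^ (x + y - (if xg = x \<and> yg = y then 1 else 0)) = 1 / (u - 1) * (u^x * u^yg + u^xg * u^y - 1 * (u^x * u^y) - (1/u) * (u^xg * u^yg))"
  proof (cases "xg = x \<and> yg = y")
    case True
    then have x1: "x \<ge> 1" using assms by simp
    then obtain x' where x': "x = Suc x'" by (cases x) auto
    have "u ^ (x + y - 1) = u^x' * u^y" by (simp add: x' power_add)
    moreover have "u^x = u * u^x'" by (simp add: x')
    ultimately show ?thesis using True u by (simp add: field_simps power_add)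
  next
    case False
    then consider "xg = Suc x" "yg = Suc y" | "xg = x" "yg = Suc y" | "xg = Suc x" "yg = y" using assms by auto
    then show ?thesis using u False by cases (auto simp: field_simps power_add)
  qed
  moreover have eq: "q powr (- real n) = u ^ n" for n by (simp add: P u_def)
  ultimately show ?thesis unfolding eq k by (simp add: qu)
qed


lemma same_side:
  assumes fA: "finite A" and fB: "finite B" and disj: "A \<inter> B = {}" and gA: "g \<notin> A"
  and RL: "rayleigh (insert g A) cL"
  and nnM: "\<And>S. S \<subseteq> B \<Longrightarrow> \<alpha> * cM S \<le> cM (insert g S) \<and> \<gamma> * cM (insert g S) \<le> cM S"
  and cN: "\<And>S. S \<subseteq> A \<union> B \<Longrightarrow> cN S = k * (cL (S \<inter> A) * cM (insert g (S \<inter> B))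
       + cL (insert g (S \<inter> A)) * cM (S \<inter> B) - \<alpha> * (cL (S \<inter> A) * cM (S \<inter> B))
       - \<gamma> * (cL (insert g (S \<inter> A)) * cM (insert g (S \<inter> B))))"
  and e: "e \<in> A" and f: "f \<in> A" and ef: "e \<noteq> f" and ypos: "\<forall>x\<in>A \<union> B. 0 < y x"
  shows "0 \<le> mp (A \<union> B) cN {e} y * mp (A \<union> B) cN {f} y - mp (A \<union> B) cN {e,f} y * mp (A \<union> B) cN {} y"
proof -
  define P where "P R = mp A cL R y" for R
  define Q where "Q R = mp A (\<lambda>S. cL (insert g S)) R y" for R
  define PM where "PM = mp B cM {} y"
  define QM where "QM = mp B (\<lambda>S. cM (insert g S)) {} y"
  define X where "X = QM - \<alpha> * PM"
  define W where "W = PM - \<gamma> * QM"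
  have NR: "mp (A \<union> B) cN R y = k * (P R * X + Q R * W)" if "R \<subseteq> A" for R
    using mp_N[OF fA fB disj that empty_subsetI, of cN k cL cM g \<alpha> \<gamma> y] cN
    unfolding P_def Q_def PM_def QM_def X_def W_def by (simp add: algebra_simps)
  have X: "0 \<le> X"
  proof -
    have "X = mp B (\<lambda>S. cM (insert g S) - \<alpha> * cM S) {} y"
      unfolding X_def QM_def PM_def mp_diff mp_scale ..
    also have "0 \<le> \<dots>" using nnM ypos by (intro mp_nonneg) (auto simp: less_imp_le)
    finally show ?thesis .
  qed
  have W: "0 \<le> W"
  proof -
    have "W = mp B (\<lambda>S. cM S - \<gamma> * cM (insert g S)) {} y"
      unfolding W_def QM_def PM_def mp_diff mp_scale ..
    also have "0 \<le> \<dots>" using nnM ypos by (intro mp_nonneg) (auto simp: less_imp_le)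
    finally show ?thesis .
  qed
  have h: "\<forall>t>0. 0 \<le> (P {e} + t*Q {e})*(P {f} + t*Q {f}) - (P {e,f} + t*Q {e,f})*(P {} + t*Q {})"
  proof (intro allI impI)
    fix t :: real assume t: "t > 0"
    define y' where "y' = y(g := t)"
    have fin: "finite (insert g A)" using fA by simp
    have y'pos: "\<forall>x\<in>insert g A. 0 < y' x" using ypos t unfolding y'_def by auto
    have "0 \<le> mpoly_d1 (insert g A) cL e y' * mpoly_d1 (insert g A) cL f y'
        - mpoly_d2 (insert g A) cL e f y' * mpoly_eval (insert g A) cL y'"
      using RL e f ef y'pos unfolding rayleigh_def by blast
    moreover have "\<And>R. R \<subseteq> A \<Longrightarrow> mp (insert g A) cL R y' = P R + t * Q R"
      unfolding P_def Q_def y'_def using mp_ins(1)[OF fA gA] mp_upd[OF gA] by simp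
    ultimately show "0 \<le> (P {e} + t*Q {e})*(P {f} + t*Q {f}) - (P {e,f} + t*Q {e,f})*(P {} + t*Q {})"
      unfolding d1_mp[OF fin] d2_mp[OF fin] eval_mp using e f by simp
  qed
  have "0 \<le> (k*(P {e}*X + Q {e}*W))*(k*(P {f}*X + Q {f}*W)) - (k*(P {e,f}*X + Q {e,f}*W))*(k*(P {}*X+Q {}*W))"
    by (rule same_side_alg[OF h X W])
  then show ?thesis using e f by (simp add: NR)
qed


lemma gside:
  assumes fA: "finite A" and gA: "g \<notin> A" and RL: "rayleigh (insert g A) cL"
  and e: "e \<in> A" and ypos: "\<forall>x\<in>A. 0 < y x"
  shows "0 \<le> mp A cL {e} y * mp A (\<lambda>S. cL (insert g S)) {} y - mp A (\<lambda>S. cL (insert g S)) {e} y * mp A cL {} y"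
proof -
  define y' where "y' = y(g := 1)"
  have fin: "finite (insert g A)" using fA by simp
  have y'pos: "\<forall>x\<in>insert g A. 0 < y' x" using ypos unfolding y'_def by auto
  have eg: "e \<noteq> g" using e gA by auto
  have "0 \<le> mpoly_d1 (insert g A) cL e y' * mpoly_d1 (insert g A) cL g y'
        - mpoly_d2 (insert g A) cL e g y' * mpoly_eval (insert g A) cL y'"
    using RL e eg y'pos unfolding rayleigh_def by blast
  moreover have "\<And>R. R \<subseteq> A \<Longrightarrow> mp (insert g A) cL R y' = mp A cL R y + mp A (\<lambda>S. cL (insert g S)) R y"
    unfolding y'_def using mp_ins(1)[OF fA gA] mp_upd[OF gA] by simp
  moreover have "\<And>R. R \<subseteq> A \<Longrightarrow> mp (insert g A) cL (insert g R) y' = mp A (\<lambda>S. cL (insert g S)) R y"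
    unfolding y'_def using mp_ins(2)[OF fA gA] mp_upd[OF gA] by simp
  moreover have "{e, g} = insert g {e}" by auto
  ultimately have "0 \<le> (mp A cL {e} y + mp A (\<lambda>S. cL (insert g S)) {e} y) * mp A (\<lambda>S. cL (insert g S)) {} y
     - mp A (\<lambda>S. cL (insert g S)) {e} y * (mp A cL {} y + mp A (\<lambda>S. cL (insert g S)) {} y)"
    unfolding d1_mp[OF fin] d2_mp[OF fin] eval_mp using e
    by (metis empty_subsetI insert_is_Un insert_subset)
  then show ?thesis by (simp add: algebra_simps)
qed

lemma cross:
  assumes fA: "finite A" and fB: "finite B" and disj: "A \<inter> B = {}" and gA: "g \<notin> A" and gB: "g \<notin> B"
  and RL: "rayleigh (insert g A) cL" and RM: "rayleigh (insert g B) cM"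
  and cN: "\<And>S. S \<subseteq> A \<union> B \<Longrightarrow> cN S = k * (cL (S \<inter> A) * cM (insert g (S \<inter> B))
       + cL (insert g (S \<inter> A)) * cM (S \<inter> B) - \<alpha> * (cL (S \<inter> A) * cM (S \<inter> B))
       - \<gamma> * (cL (insert g (S \<inter> A)) * cM (insert g (S \<inter> B))))"
  and ag: "\<alpha> * \<gamma> \<le> 1"
  and e: "e \<in> A" and f: "f \<in> B" and ypos: "\<forall>x\<in>A \<union> B. 0 < y x"
  shows "0 \<le> mp (A \<union> B) cN {e} y * mp (A \<union> B) cN {f} y - mp (A \<union> B) cN {e,f} y * mp (A \<union> B) cN {} y"
proof -
  note NN = mp_N[OF fA fB disj _ _ cN]
  have n1: "mp (A \<union> B) cN {} y = mp (A \<union> B) cN ({} \<union> {}) y" by simp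
  have n2: "mp (A \<union> B) cN {e} y = mp (A \<union> B) cN ({e} \<union> {}) y" by simp
  have n3: "mp (A \<union> B) cN {f} y = mp (A \<union> B) cN ({} \<union> {f}) y" by simp
  have s4: "{e,f} = {e} \<union> {f}" by auto
  have n4: "mp (A \<union> B) cN {e,f} y = mp (A \<union> B) cN ({e} \<union> {f}) y" by (subst s4) (rule refl)
  have gl: "0 \<le> mp A cL {e} y * mp A (\<lambda>S. cL (insert g S)) {} y - mp A (\<lambda>S. cL (insert g S)) {e} y * mp A cL {} y"
    by (rule gside[OF fA gA RL e]) (use ypos in auto)
  have gm: "0 \<le> mp B cM {f} y * mp B (\<lambda>S. cM (insert g S)) {} y - mp B (\<lambda>S. cM (insert g S)) {f} y * mp B cM {} y"
    by (rule gside[OF fB gB RM f]) (use ypos in auto)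
  show ?thesis unfolding n1 n2 n3 n4 using e f
    by (simp only: NN empty_subsetI insert_subset simp_thms) (rule cross_alg[OF gl gm ag])
qed

lemma core:
  assumes fA: "finite A" and fB: "finite B" and disj: "A \<inter> B = {}" and gA: "g \<notin> A" and gB: "g \<notin> B"
  and RL: "rayleigh (insert g A) cL" and RM: "rayleigh (insert g B) cM"
  and nnL: "\<And>S. S \<subseteq> A \<Longrightarrow> \<alpha> * cL S \<le> cL (insert g S) \<and> \<gamma> * cL (insert g S) \<le> cL S"
  and nnM: "\<And>S. S \<subseteq> B \<Longrightarrow> \<alpha> * cM S \<le> cM (insert g S) \<and> \<gamma> * cM (insert g S) \<le> cM S"
  and cN: "\<And>S. S \<subseteq> A \<union> B \<Longrightarrow> cN S = k * (cL (S \<inter> A) * cM (insert g (S \<inter> B))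
       + cL (insert g (S \<inter> A)) * cM (S \<inter> B) - \<alpha> * (cL (S \<inter> A) * cM (S \<inter> B))
       - \<gamma> * (cL (insert g (S \<inter> A)) * cM (insert g (S \<inter> B))))"
  and ag: "\<alpha> * \<gamma> \<le> 1" and k: "0 \<le> k"
  and nz: "\<exists>S\<subseteq>A \<union> B. cN S \<noteq> 0"
  shows "rayleigh (A \<union> B) cN"
proof -
  have fin: "finite (A \<union> B)" using fA fB by simp
  have cN': "\<And>S. S \<subseteq> B \<union> A \<Longrightarrow> cN S = k * (cM (S \<inter> B) * cL (insert g (S \<inter> A))
       + cM (insert g (S \<inter> B)) * cL (S \<inter> A) - \<alpha> * (cM (S \<inter> B) * cL (S \<inter> A))
       - \<gamma> * (cM (insert g (S \<inter> B)) * cL (insert g (S \<inter> A))))"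
    using cN by (simp add: Un_commute algebra_simps)
  have disj': "B \<inter> A = {}" using disj by auto
  have pos: "0 \<le> cN S" if S: "S \<subseteq> A \<union> B" for S
  proof -
    have RL0: "\<forall>T\<subseteq>insert g A. 0 \<le> cL T" using RL unfolding rayleigh_def by blast
    have sub: "S \<inter> A \<subseteq> insert g A" "insert g (S \<inter> A) \<subseteq> insert g A" by auto
    have p: "0 \<le> cL (S \<inter> A)" "0 \<le> cL (insert g (S \<inter> A))"
      using RL0[rule_format, OF sub(1)] RL0[rule_format, OF sub(2)] by auto
    have q: "0 \<le> cM (insert g (S \<inter> B)) - \<alpha> * cM (S \<inter> B)" "0 \<le> cM (S \<inter> B) - \<gamma> * cM (insert g (S \<inter> B))"
      using nnM[of "S \<inter> B"] by auto
    have "0 \<le> k * (cL (S \<inter> A) * (cM (insert g (S \<inter> B)) - \<alpha> * cM (S \<inter> B))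
        + cL (insert g (S \<inter> A)) * (cM (S \<inter> B) - \<gamma> * cM (insert g (S \<inter> B))))"
      using p q k by (intro mult_nonneg_nonneg add_nonneg_nonneg) auto
    then show ?thesis using cN[OF S] by (simp add: algebra_simps)
  qed
  have main: "0 \<le> mp (A \<union> B) cN {e} y * mp (A \<union> B) cN {f} y - mp (A \<union> B) cN {e,f} y * mp (A \<union> B) cN {} y"
    if e: "e \<in> A \<union> B" and f: "f \<in> A \<union> B" and ef: "e \<noteq> f" and ypos: "\<forall>x\<in>A \<union> B. 0 < y x" for e f y
  proof -
    have sw: "{f, e} = {e, f}" by auto
    have ypos': "\<forall>x\<in>B \<union> A. 0 < y x" using ypos by auto
    consider "e \<in> A" "f \<in> A" | "e \<in> A" "f \<in> B" | "e \<in> B" "f \<in> A" | "e \<in> B" "f \<in> B" using e f by auto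
    then show ?thesis
    proof cases
      case 1 show ?thesis using same_side[OF fA fB disj gA RL nnM cN 1(1) 1(2) ef ypos] .
    next
      case 2 show ?thesis using cross[OF fA fB disj gA gB RL RM cN ag 2(1) 2(2) ypos] .
    next
      case 3
      have "0 \<le> mp (A \<union> B) cN {f} y * mp (A \<union> B) cN {e} y - mp (A \<union> B) cN {f,e} y * mp (A \<union> B) cN {} y"
        using cross[OF fA fB disj gA gB RL RM cN ag 3(2) 3(1) ypos] .
      then show ?thesis unfolding sw by (simp add: mult.commute)
    next
      case 4
      have "0 \<le> mp (B \<union> A) cN {e} y * mp (B \<union> A) cN {f} y - mp (B \<union> A) cN {e,f} y * mp (B \<union> A) cN {} y"
        using same_side[OF fB fA disj' gB RM nnL cN' 4(1) 4(2) ef ypos'] .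
      then show ?thesis by (simp add: Un_commute)
    qed
  qed
  show ?thesis unfolding rayleigh_def
    using pos nz main by (simp add: d1_mp[OF fin] d2_mp[OF fin] eval_mp)
qed


lemma m_card: "matroid E r \<Longrightarrow> S \<subseteq> E \<Longrightarrow> r S \<le> card S"
  unfolding matroid_def by blast
lemma m_mono: "matroid E r \<Longrightarrow> S \<subseteq> T \<Longrightarrow> T \<subseteq> E \<Longrightarrow> r S \<le> r T"
  unfolding matroid_def by blast
lemma m_sub: "matroid E r \<Longrightarrow> S \<subseteq> E \<Longrightarrow> T \<subseteq> E \<Longrightarrow> r (S \<union> T) + r (S \<inter> T) \<le> r S + r T"
  unfolding matroid_def by blast
lemma m_fin: "matroid E r \<Longrightarrow> finite E"
  unfolding matroid_def by blast
lemma m_empty: "matroid E r \<Longrightarrow> r {} = 0"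
  using m_card[of E r "{}"] by simp

lemma m_ins: assumes M: "matroid E r" and S: "S \<subseteq> E" and e: "e \<in> E"
  shows "r (insert e S) = r S \<or> r (insert e S) = Suc (r S)"
proof (cases "e \<in> S")
  case True then show ?thesis by (simp add: insert_absorb)
next
  case False
  have "r (S \<union> {e}) + r (S \<inter> {e}) \<le> r S + r {e}" by (rule m_sub[OF M S]) (use e in auto)
  moreover have "S \<inter> {e} = {}" using False by auto
  moreover have "r {e} \<le> 1" using m_card[OF M, of "{e}"] e by simp
  moreover have "r S \<le> r (insert e S)" using m_mono[OF M, of S "insert e S"] S e by auto
  ultimately show ?thesis using m_empty[OF M] by auto
qed

lemma m_cl_mono: assumes M: "matroid E r" and ST: "S \<subseteq> T" "T \<subseteq> E" and e: "e \<in> E"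
  and h: "r (insert e S) = r S"
  shows "r (insert e T) = r T"
proof (cases "e \<in> T")
  case True then show ?thesis by (simp add: insert_absorb)
next
  case False
  have "r (insert e S \<union> T) + r (insert e S \<inter> T) \<le> r (insert e S) + r T"
    by (rule m_sub[OF M]) (use ST e in auto)
  moreover have "insert e S \<union> T = insert e T" "insert e S \<inter> T = S" using False ST by auto
  moreover have "r T \<le> r (insert e T)" using m_mono[OF M, of T "insert e T"] ST e by auto
  ultimately show ?thesis using h by auto
qed

lemma m_extend:
  assumes M: "matroid E r" and I: "I \<subseteq> E" "r I = card I" and D: "finite D" "D \<subseteq> E"
  shows "\<exists>J. I \<subseteq> J \<and> J \<subseteq> I \<union> D \<and> r J = card J \<and> r J = r (I \<union> D)"
  using D
proof (induction D rule: finite_induct)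
  case empty then show ?case using I by auto
next
  case (insert a D)
  then obtain J where J: "I \<subseteq> J" "J \<subseteq> I \<union> D" "r J = card J" "r J = r (I \<union> D)" by auto
  have a: "a \<in> E" using insert by auto
  have ID: "I \<union> D \<subseteq> E" using I insert by auto
  have eqI: "I \<union> insert a D = insert a (I \<union> D)" by auto
  show ?case
  proof (cases "r (I \<union> insert a D) = r (I \<union> D)")
    case True then show ?thesis using J by auto
  next
    case False
    then have up: "r (I \<union> insert a D) = Suc (r (I \<union> D))" using m_ins[OF M ID a] eqI by auto
    have aID: "a \<notin> I \<union> D" using False by (auto simp: insert_absorb eqI)
    have JE: "J \<subseteq> E" using J ID by auto
    have finJ: "finite J" using m_fin[OF M] JE finite_subset by blast
    have aJ: "a \<notin> J" using aID J by auto
    have "r (insert a J \<union> (I \<union> D)) + r (insert a J \<inter> (I \<union> D)) \<le> r (insert a J) + r (I \<union> D)"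
      by (rule m_sub[OF M]) (use JE ID a in auto)
    moreover have "insert a J \<union> (I \<union> D) = I \<union> insert a D" "insert a J \<inter> (I \<union> D) = J" using J aID by auto
    ultimately have ge: "r (insert a J) \<ge> Suc (r J)" using up J by simp
    have le1: "r (insert a J) \<le> card (insert a J)" using m_card[OF M] JE a by auto
    have le2: "r (insert a J) \<le> r (I \<union> insert a D)" unfolding eqI by (rule m_mono[OF M]) (use J ID a in auto)
    have cardJ: "card (insert a J) = Suc (card J)" using finJ aJ by simp
    show ?thesis
      apply (rule exI[of _ "insert a J"])
      using J ge le1 le2 cardJ up by auto
  qed
qed


lemma side:
  assumes M: "matroid (insert g A) r" and nl: "r {g} \<noteq> 0" and gA: "g \<notin> A" and T: "T \<subseteq> A"
  shows "(r (insert g T) = r T \<or> r (insert g T) = Suc (r T)) \<and> 1 \<le> r (insert g T) \<and> r T \<le> card T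
    \<and> r (insert g T) \<le> r (insert g A) \<and> r T \<le> r (insert g A) \<and> card (insert g T) = Suc (card T) \<and> finite T"
proof -
  have fin: "finite T" using m_fin[OF M] T finite_subset by auto
  have gT: "g \<notin> T" using gA T by auto
  have 1: "r (insert g T) = r T \<or> r (insert g T) = Suc (r T)" by (rule m_ins[OF M]) (use T in auto)
  have 2: "r {g} \<le> r (insert g T)" by (rule m_mono[OF M]) (use T in auto)
  have 3: "r T \<le> card T" by (rule m_card[OF M]) (use T in auto)
  have 4: "r (insert g T) \<le> r (insert g A)" by (rule m_mono[OF M]) (use T in auto)
  have 5: "r T \<le> r (insert g A)" by (rule m_mono[OF M]) (use T in auto)
  show ?thesis using 1 2 3 4 5 nl fin gT by simp
qed

lemma submod_arith:
  fixes fU fI fS fT hU hI hS hT :: nat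
  assumes "fU + fI \<le> fS + fT" "hU + hI \<le> hS + hT" "hT < fT \<Longrightarrow> hU + 1 = fU" "hS < fS \<Longrightarrow> hU + 1 = fU"
    "fS \<le> hS + 1" "fT \<le> hT + 1"
  shows "min fU hU + min fI hI \<le> min fS hS + min fT hT"
  using assms by (simp add: min_def) arith

lemma matroid_cong:
  assumes M: "matroid E r" and eq: "\<And>S. S \<subseteq> E \<Longrightarrow> r S = r' S"
  shows "matroid E r'"
  unfolding matroid_def
proof (intro conjI allI impI)
  show "finite E" using M unfolding matroid_def by blast
next
  fix S assume "S \<subseteq> E" then show "r' S \<le> card S" using M eq unfolding matroid_def by metis
next
  fix S T assume h: "S \<subseteq> T \<and> T \<subseteq> E"
  then have "r S \<le> r T" using M unfolding matroid_def by blast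
  moreover have "S \<subseteq> E" using h by blast
  ultimately show "r' S \<le> r' T" using eq h by metis
next
  fix S T assume h: "S \<subseteq> E \<and> T \<subseteq> E"
  then have "r (S \<union> T) + r (S \<inter> T) \<le> r S + r T" using M unfolding matroid_def by blast
  moreover have "S \<union> T \<subseteq> E" "S \<inter> T \<subseteq> E" using h by auto
  ultimately show "r' (S \<union> T) + r' (S \<inter> T) \<le> r' S + r' T" using eq h by metis
qed

locale ts =
  fixes A B :: "'a set" and g :: 'a and rL rM :: "'a set \<Rightarrow> nat"
  assumes fA: "finite A" and fB: "finite B" and disj: "A \<inter> B = {}" and gA: "g \<notin> A" and gB: "g \<notin> B"
  and matL: "matroid (insert g A) rL" and matM: "matroid (insert g B) rM"
  and nlL: "rL {g} \<noteq> 0" and nlM: "rM {g} \<noteq> 0"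
  and ncL: "rL A = rL (insert g A)" and ncM: "rM B = rM (insert g B)"
begin

definition "fN S = rL (S \<inter> A) + rM (S \<inter> B)"
definition "hN S = rL (insert g (S \<inter> A)) + rM (insert g (S \<inter> B)) - 1"
definition "rN S = rL (S \<inter> A) + rM (S \<inter> B)
   - (if rL (insert g (S \<inter> A)) = rL (S \<inter> A) \<and> rM (insert g (S \<inter> B)) = rM (S \<inter> B) then 1 else 0)"

lemmas sL = side[OF matL nlL gA] and sM = side[OF matM nlM gB]

lemma rN_min: "rN S = min (fN S) (hN S)"
  using sL[of "S \<inter> A"] sM[of "S \<inter> B"] unfolding rN_def fN_def hN_def by auto

lemma tsr: assumes "S \<subseteq> A \<union> B"
  shows "two_sum_rank (insert g A) rL (insert g B) rM g S = rN S"
proof -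
  have "g \<notin> S" using assms gA gB by auto
  then have "S \<inter> insert g A = S \<inter> A" "S \<inter> insert g B = S \<inter> B" by auto
  then show ?thesis unfolding two_sum_rank_def rN_def closure_m_def by simp
qed

lemma ground: "two_sum_ground (insert g A) (insert g B) g = A \<union> B"
  unfolding two_sum_ground_def using gA gB by auto

lemma cardS: "S \<subseteq> A \<union> B \<Longrightarrow> card S = card (S \<inter> A) + card (S \<inter> B)"
proof -
  assume S: "S \<subseteq> A \<union> B"
  have "S = (S \<inter> A) \<union> (S \<inter> B)" using S by auto
  moreover have "finite (S \<inter> A)" "finite (S \<inter> B)" using fA fB by auto
  ultimately show ?thesis using disj card_Un_disjoint[of "S \<inter> A" "S \<inter> B"] by auto
qed

lemma matroid_rN: "matroid (A \<union> B) rN"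
  unfolding matroid_def
proof (intro conjI allI impI)
  show "finite (A \<union> B)" using fA fB by simp
next
  fix S assume S: "S \<subseteq> A \<union> B"
  show "rN S \<le> card S" using sL[of "S \<inter> A"] sM[of "S \<inter> B"] cardS[OF S] unfolding rN_def by auto
next
  fix S T assume ST: "S \<subseteq> T \<and> T \<subseteq> A \<union> B"
  have "rL (S \<inter> A) \<le> rL (T \<inter> A)" by (rule m_mono[OF matL]) (use ST in auto)
  moreover have "rM (S \<inter> B) \<le> rM (T \<inter> B)" by (rule m_mono[OF matM]) (use ST in auto)
  moreover have "rL (insert g (S \<inter> A)) \<le> rL (insert g (T \<inter> A))" by (rule m_mono[OF matL]) (use ST in auto)
  moreover have "rM (insert g (S \<inter> B)) \<le> rM (insert g (T \<inter> B))" by (rule m_mono[OF matM]) (use ST in auto)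
  ultimately show "rN S \<le> rN T" unfolding rN_min fN_def hN_def by auto
next
  fix S T assume ST: "S \<subseteq> A \<union> B \<and> T \<subseteq> A \<union> B"
  let ?U = "S \<union> T" and ?I = "S \<inter> T"
  have uA: "?U \<inter> A = (S \<inter> A) \<union> (T \<inter> A)" and iA: "?I \<inter> A = (S \<inter> A) \<inter> (T \<inter> A)" by auto
  have uB: "?U \<inter> B = (S \<inter> B) \<union> (T \<inter> B)" and iB: "?I \<inter> B = (S \<inter> B) \<inter> (T \<inter> B)" by auto
  have ugA: "insert g (?U \<inter> A) = insert g (S \<inter> A) \<union> insert g (T \<inter> A)"
    and igA: "insert g (?I \<inter> A) = insert g (S \<inter> A) \<inter> insert g (T \<inter> A)" by auto
  have ugB: "insert g (?U \<inter> B) = insert g (S \<inter> B) \<union> insert g (T \<inter> B)"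
    and igB: "insert g (?I \<inter> B) = insert g (S \<inter> B) \<inter> insert g (T \<inter> B)" by auto
  have f1: "rL (?U \<inter> A) + rL (?I \<inter> A) \<le> rL (S \<inter> A) + rL (T \<inter> A)"
    unfolding uA iA by (rule m_sub[OF matL]) auto
  have f2: "rM (?U \<inter> B) + rM (?I \<inter> B) \<le> rM (S \<inter> B) + rM (T \<inter> B)"
    unfolding uB iB by (rule m_sub[OF matM]) auto
  have h1: "rL (insert g (?U \<inter> A)) + rL (insert g (?I \<inter> A)) \<le> rL (insert g (S \<inter> A)) + rL (insert g (T \<inter> A))"
    unfolding ugA igA by (rule m_sub[OF matL]) auto
  have h2: "rM (insert g (?U \<inter> B)) + rM (insert g (?I \<inter> B)) \<le> rM (insert g (S \<inter> B)) + rM (insert g (T \<inter> B))"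
    unfolding ugB igB by (rule m_sub[OF matM]) auto
  have fS: "fN (?U) + fN ?I \<le> fN S + fN T" using f1 f2 unfolding fN_def by simp
  have hS: "hN (?U) + hN ?I \<le> hN S + hN T"
    using h1 h2 sL[of "?U \<inter> A"] sM[of "?U \<inter> B"] sL[of "?I \<inter> A"] sM[of "?I \<inter> B"]
    unfolding hN_def by auto
  have drop: "hN ?U + 1 = fN ?U" if "hN Z < fN Z" "Z \<subseteq> ?U" for Z
  proof -
    have dZ: "rL (insert g (Z \<inter> A)) = rL (Z \<inter> A)" "rM (insert g (Z \<inter> B)) = rM (Z \<inter> B)"
      using that(1) sL[of "Z \<inter> A"] sM[of "Z \<inter> B"] unfolding hN_def fN_def by auto
    have "rL (insert g (?U \<inter> A)) = rL (?U \<inter> A)"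
      by (rule m_cl_mono[OF matL _ _ _ dZ(1)]) (use that(2) in auto)
    moreover have "rM (insert g (?U \<inter> B)) = rM (?U \<inter> B)"
      by (rule m_cl_mono[OF matM _ _ _ dZ(2)]) (use that(2) in auto)
    ultimately show ?thesis using sL[of "?U \<inter> A"] unfolding hN_def fN_def by auto
  qed
  have b: "fN Z \<le> hN Z + 1" for Z using sL[of "Z \<inter> A"] sM[of "Z \<inter> B"] unfolding hN_def fN_def by auto
  show "rN ?U + rN ?I \<le> rN S + rN T"
    unfolding rN_min by (rule submod_arith[OF fS hS]) (use drop b in auto)
qed

lemma matroid_N: "matroid (two_sum_ground (insert g A) (insert g B) g) (two_sum_rank (insert g A) rL (insert g B) rM g)"
  unfolding ground using matroid_cong[OF matroid_rN] tsr by metis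

lemma rN_top: "rN (A \<union> B) = rL (insert g A) + rM (insert g B) - 1"
proof -
  have "(A \<union> B) \<inter> A = A" "(A \<union> B) \<inter> B = B" using disj by auto
  then show ?thesis unfolding rN_def using ncL ncM by simp
qed

end


context ts begin

abbreviation "N \<equiv> two_sum_rank (insert g A) rL (insert g B) rM g"

lemma NT: "N (A \<union> B) = rL (insert g A) + rM (insert g B) - 1"
  using tsr[of "A \<union> B"] rN_top by simp

lemma fc_nonneg: "0 \<le> family_coeff Q S" by (simp add: family_coeff_def)

lemma B_ok:
  assumes RL: "rayleigh (insert g A) (family_coeff (bases (insert g A) rL))"
    and RM: "rayleigh (insert g B) (family_coeff (bases (insert g B) rM))"
  shows "rayleigh (A \<union> B) (family_coeff (bases (A \<union> B) N))"
proof -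
  define cL where "cL = family_coeff (bases (insert g A) rL)"
  define cM where "cM = family_coeff (bases (insert g B) rM)"
  define cN where "cN = family_coeff (bases (A \<union> B) N)"
  have cN: "cN S = 1 * (cL (S \<inter> A) * cM (insert g (S \<inter> B))
       + cL (insert g (S \<inter> A)) * cM (S \<inter> B) - 0 * (cL (S \<inter> A) * cM (S \<inter> B))
       - 0 * (cL (insert g (S \<inter> A)) * cM (insert g (S \<inter> B))))" if S: "S \<subseteq> A \<union> B" for S
  proof -
    have e: "(S \<in> bases (A \<union> B) N) = (rN S = card S \<and> rN S = rL (insert g A) + rM (insert g B) - 1)"
      unfolding bases_def mem_Collect_eq tsr[OF S] NT using S by (simp only: simp_thms)
    have l1: "(S \<inter> A \<in> bases (insert g A) rL) = (rL (S \<inter> A) = card (S \<inter> A) \<and> rL (S \<inter> A) = rL (insert g A))"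
      by (auto simp: bases_def)
    have l2: "(insert g (S \<inter> A) \<in> bases (insert g A) rL) = (rL (insert g (S \<inter> A)) = Suc (card (S \<inter> A)) \<and> rL (insert g (S \<inter> A)) = rL (insert g A))"
      using sL[of "S \<inter> A"] by (auto simp: bases_def)
    have m1: "(S \<inter> B \<in> bases (insert g B) rM) = (rM (S \<inter> B) = card (S \<inter> B) \<and> rM (S \<inter> B) = rM (insert g B))"
      by (auto simp: bases_def)
    have m2: "(insert g (S \<inter> B) \<in> bases (insert g B) rM) = (rM (insert g (S \<inter> B)) = Suc (card (S \<inter> B)) \<and> rM (insert g (S \<inter> B)) = rM (insert g B))"
      using sM[of "S \<inter> B"] by (auto simp: bases_def)
    show ?thesis unfolding cN_def cL_def cM_def family_coeff_def e l1 l2 m1 m2 rN_def cardS[OF S]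
      by (rule arith_B) (use sL[of "S \<inter> A"] sM[of "S \<inter> B"] in auto)
  qed
  have nz: "\<exists>S\<subseteq>A \<union> B. cN S \<noteq> 0"
  proof -
    have "\<exists>J. {} \<subseteq> J \<and> J \<subseteq> {} \<union> A \<and> rL J = card J \<and> rL J = rL ({} \<union> A)"
      by (rule m_extend[OF matL]) (use m_empty[OF matL] fA in auto)
    then obtain J1 where J1: "J1 \<subseteq> {} \<union> A" "rL J1 = card J1" "rL J1 = rL ({} \<union> A)" by blast
    have g1: "rM {g} = card {g}" using m_card[OF matM, of "{g}"] nlM by auto
    have "\<exists>J. {g} \<subseteq> J \<and> J \<subseteq> {g} \<union> insert g B \<and> rM J = card J \<and> rM J = rM ({g} \<union> insert g B)"
      by (rule m_extend[OF matM _ g1]) (use fB in auto)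
    then obtain J2 where J2: "{g} \<subseteq> J2" "J2 \<subseteq> {g} \<union> insert g B" "rM J2 = card J2" "rM J2 = rM ({g} \<union> insert g B)" by blast
    have J1A: "J1 \<subseteq> A" using J1(1) by simp
    have J2B: "J2 \<subseteq> insert g B" using J2(2) by simp
    have gJ2: "g \<in> J2" using J2(1) by simp
    define S where "S = J1 \<union> (J2 - {g})"
    have S: "S \<subseteq> A \<union> B" using J1A J2B unfolding S_def by blast
    have SA: "S \<inter> A = J1"
    proof -
      have "(J2 - {g}) \<inter> A = {}" using J2B disj by blast
      then show ?thesis unfolding S_def using J1A by blast
    qed
    have SB: "insert g (S \<inter> B) = J2"
    proof -
      have "J1 \<inter> B = {}" using J1A disj by blast
      moreover have "(J2 - {g}) \<inter> B = J2 - {g}" using J2B by blast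
      ultimately have "S \<inter> B = J2 - {g}" unfolding S_def by blast
      then show ?thesis using gJ2 by blast
    qed
    have "J1 \<in> bases (insert g A) rL"
      unfolding bases_def mem_Collect_eq using J1A J1(2) J1(3) ncL by (simp add: subset_insertI2)
    then have c1: "cL (S \<inter> A) = 1" unfolding SA cL_def family_coeff_def by simp
    have "J2 \<in> bases (insert g B) rM"
      unfolding bases_def mem_Collect_eq using J2B J2(3) J2(4) gJ2 by (simp add: insert_absorb)
    then have c2: "cM (insert g (S \<inter> B)) = 1" unfolding SB cM_def family_coeff_def by simp
    have X: "0 \<le> cL (insert g (S \<inter> A)) * cM (S \<inter> B)"
      unfolding cL_def cM_def by (intro mult_nonneg_nonneg fc_nonneg)
    have "cN S \<ge> 1" unfolding cN[OF S] c1 c2 using X by simp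
    then have "cN S \<noteq> 0" by linarith
    then show ?thesis using S by blast
  qed
  have nn: "\<And>T. 0 * cL T \<le> cL (insert g T) \<and> 0 * cL (insert g T) \<le> cL T"
      "\<And>T. 0 * cM T \<le> cM (insert g T) \<and> 0 * cM (insert g T) \<le> cM T"
      unfolding cL_def cM_def by (simp_all add: fc_nonneg)
  show ?thesis
    using core[where \<alpha>=0 and \<gamma>=0 and k=1, OF fA fB disj gA gB RL[folded cL_def] RM[folded cM_def] nn(1) nn(2) cN _ _ nz]
    unfolding cN_def by simp
qed

lemma I_ok:
  assumes RL: "rayleigh (insert g A) (family_coeff (indeps (insert g A) rL))"
    and RM: "rayleigh (insert g B) (family_coeff (indeps (insert g B) rM))"
  shows "rayleigh (A \<union> B) (family_coeff (indeps (A \<union> B) N))"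
proof -
  define cL where "cL = family_coeff (indeps (insert g A) rL)"
  define cM where "cM = family_coeff (indeps (insert g B) rM)"
  define cN where "cN = family_coeff (indeps (A \<union> B) N)"
  have l1: "(T \<in> indeps (insert g A) rL) = (rL T = card T)"
     "(insert g T \<in> indeps (insert g A) rL) = (rL (insert g T) = Suc (card T))" if "T \<subseteq> A" for T
    using sL[OF that] that by (auto simp: indeps_def)
  have m1: "(T \<in> indeps (insert g B) rM) = (rM T = card T)"
     "(insert g T \<in> indeps (insert g B) rM) = (rM (insert g T) = Suc (card T))" if "T \<subseteq> B" for T
    using sM[OF that] that by (auto simp: indeps_def)
  have cN: "cN S = 1 * (cL (S \<inter> A) * cM (insert g (S \<inter> B))
       + cL (insert g (S \<inter> A)) * cM (S \<inter> B) - 0 * (cL (S \<inter> A) * cM (S \<inter> B))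
       - 1 * (cL (insert g (S \<inter> A)) * cM (insert g (S \<inter> B))))" if S: "S \<subseteq> A \<union> B" for S
  proof -
    have e: "(S \<in> indeps (A \<union> B) N) = (rN S = card S)"
      unfolding indeps_def mem_Collect_eq tsr[OF S] using S by (simp only: simp_thms)
    show ?thesis unfolding cN_def cL_def cM_def family_coeff_def e l1[OF Int_lower2[of S A]] m1[OF Int_lower2[of S B]] rN_def cardS[OF S]
      by (rule arith_I) (use sL[of "S \<inter> A"] sM[of "S \<inter> B"] in auto)
  qed
  have nnL: "0 * cL T \<le> cL (insert g T) \<and> 1 * cL (insert g T) \<le> cL T" if "T \<subseteq> A" for T
    using sL[OF that] unfolding cL_def family_coeff_def l1[OF that] by auto
  have nnM: "0 * cM T \<le> cM (insert g T) \<and> 1 * cM (insert g T) \<le> cM T" if "T \<subseteq> B" for T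
    using sM[OF that] unfolding cM_def family_coeff_def m1[OF that] by auto
  have nz: "\<exists>S\<subseteq>A \<union> B. cN S \<noteq> 0"
  proof -
    have "N {} = 0" using tsr[of "{}"] m_empty[OF matL] m_empty[OF matM] by (simp add: rN_def)
    then have "cN {} = 1" unfolding cN_def family_coeff_def indeps_def by simp
    then show ?thesis by force
  qed
  show ?thesis
    using core[where \<alpha>=0 and \<gamma>=1 and k=1, OF fA fB disj gA gB RL[folded cL_def] RM[folded cM_def] nnL nnM cN _ _ nz]
    unfolding cN_def by simp
qed

lemma S_ok:
  assumes RL: "rayleigh (insert g A) (family_coeff (spannings (insert g A) rL))"
    and RM: "rayleigh (insert g B) (family_coeff (spannings (insert g B) rM))"
  shows "rayleigh (A \<union> B) (family_coeff (spannings (A \<union> B) N))"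
proof -
  define cL where "cL = family_coeff (spannings (insert g A) rL)"
  define cM where "cM = family_coeff (spannings (insert g B) rM)"
  define cN where "cN = family_coeff (spannings (A \<union> B) N)"
  have l1: "(T \<in> spannings (insert g A) rL) = (rL T = rL (insert g A))"
     "(insert g T \<in> spannings (insert g A) rL) = (rL (insert g T) = rL (insert g A))" if "T \<subseteq> A" for T
    using that by (auto simp: spannings_def)
  have m1: "(T \<in> spannings (insert g B) rM) = (rM T = rM (insert g B))"
     "(insert g T \<in> spannings (insert g B) rM) = (rM (insert g T) = rM (insert g B))" if "T \<subseteq> B" for T
    using that by (auto simp: spannings_def)
  have cN: "cN S = 1 * (cL (S \<inter> A) * cM (insert g (S \<inter> B))
       + cL (insert g (S \<inter> A)) * cM (S \<inter> B) - 1 * (cL (S \<inter> A) * cM (S \<inter> B))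
       - 0 * (cL (insert g (S \<inter> A)) * cM (insert g (S \<inter> B))))" if S: "S \<subseteq> A \<union> B" for S
  proof -
    have e: "(S \<in> spannings (A \<union> B) N) = (rN S = rL (insert g A) + rM (insert g B) - 1)"
      unfolding spannings_def mem_Collect_eq tsr[OF S] NT using S by (simp only: simp_thms)
    show ?thesis unfolding cN_def cL_def cM_def family_coeff_def e l1[OF Int_lower2[of S A]] m1[OF Int_lower2[of S B]] rN_def
      by (rule arith_S) (use sL[of "S \<inter> A"] sM[of "S \<inter> B"] in auto)
  qed
  have nnL: "1 * cL T \<le> cL (insert g T) \<and> 0 * cL (insert g T) \<le> cL T" if "T \<subseteq> A" for T
  proof -
    have "rL T = rL (insert g A) \<Longrightarrow> rL (insert g T) = rL (insert g A)" using sL[OF that] by auto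
    then show ?thesis unfolding cL_def family_coeff_def l1[OF that] by simp
  qed
  have nnM: "1 * cM T \<le> cM (insert g T) \<and> 0 * cM (insert g T) \<le> cM T" if "T \<subseteq> B" for T
  proof -
    have "rM T = rM (insert g B) \<Longrightarrow> rM (insert g T) = rM (insert g B)" using sM[OF that] by auto
    then show ?thesis unfolding cM_def family_coeff_def m1[OF that] by simp
  qed
  have nz: "\<exists>S\<subseteq>A \<union> B. cN S \<noteq> 0"
  proof -
    have "A \<union> B \<in> spannings (A \<union> B) N" unfolding spannings_def by blast
    then have "cN (A \<union> B) = 1" unfolding cN_def family_coeff_def by simp
    then show ?thesis by auto
  qed
  show ?thesis
    using core[where \<alpha>=1 and \<gamma>=0 and k=1, OF fA fB disj gA gB RL[folded cL_def] RM[folded cM_def] nnL nnM cN _ _ nz]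
    unfolding cN_def by simp
qed

lemma potts_nn:
  fixes x xg :: nat and q :: real
  assumes "xg = x \<or> xg = Suc x" "0 < q" "q \<le> 1"
  shows "1 * q powr (- real x) \<le> q powr (- real xg) \<and> q * q powr (- real xg) \<le> q powr (- real x)"
proof -
  have u: "1 \<le> 1/q" using assms by simp
  have "(1/q)^x \<le> (1/q)^xg" using assms(1) u by (auto intro: power_increasing)
  moreover have "q * (1/q)^xg \<le> (1/q)^x"
    using assms(1)
  proof
    assume "xg = x"
    then show ?thesis using assms(2,3) by (simp add: mult_left_le_one_le)
  next
    assume "xg = Suc x"
    then show ?thesis using assms(2) by simp
  qed
  ultimately show ?thesis unfolding powr_nat_neg[OF assms(2)] by simp
qed

lemma P_ok:
  assumes q0: "0 < q" and q1: "q \<le> 1/2"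
    and RL: "rayleigh (insert g A) (potts_coeff rL q)"
    and RM: "rayleigh (insert g B) (potts_coeff rM q)"
  shows "rayleigh (A \<union> B) (potts_coeff N q)"
proof -
  define cL where "cL = potts_coeff rL q"
  define cM where "cM = potts_coeff rM q"
  define cN where "cN = potts_coeff N q"
  have cN: "cN S = q / (1 - q) * (cL (S \<inter> A) * cM (insert g (S \<inter> B))
       + cL (insert g (S \<inter> A)) * cM (S \<inter> B) - 1 * (cL (S \<inter> A) * cM (S \<inter> B))
       - q * (cL (insert g (S \<inter> A)) * cM (insert g (S \<inter> B))))" if S: "S \<subseteq> A \<union> B" for S
    unfolding cN_def cL_def cM_def potts_coeff_def tsr[OF S] rN_def
    by (rule arith_P) (use sL[of "S \<inter> A"] sM[of "S \<inter> B"] q0 q1 in auto)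
  have nnL: "1 * cL T \<le> cL (insert g T) \<and> q * cL (insert g T) \<le> cL T" if "T \<subseteq> A" for T
    unfolding cL_def potts_coeff_def by (rule potts_nn) (use sL[OF that] q0 q1 in auto)
  have nnM: "1 * cM T \<le> cM (insert g T) \<and> q * cM (insert g T) \<le> cM T" if "T \<subseteq> B" for T
    unfolding cM_def potts_coeff_def by (rule potts_nn) (use sM[OF that] q0 q1 in auto)
  have nz: "\<exists>S\<subseteq>A \<union> B. cN S \<noteq> 0"
  proof -
    have "cN {} \<noteq> 0" unfolding cN_def potts_coeff_def using q0 by simp
    then show ?thesis by force
  qed
  have k: "0 \<le> q / (1 - q)" using q0 q1 by simp
  have ag: "1 * q \<le> 1" using q1 by simp
  show ?thesis
    using core[where \<alpha>=1 and \<gamma>=q and k="q/(1-q)", OF fA fB disj gA gB RL[folded cL_def] RM[folded cM_def] nnL nnM cN ag k nz]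
    unfolding cN_def .
qed

end

lemma ts_of:
  assumes TS: "two_sum_defined (insert g A) rL (insert g B) rM g" and gA: "g \<notin> A" and gB: "g \<notin> B"
    and mL: "matroid (insert g A) rL" and mM: "matroid (insert g B) rM"
  shows "ts A B g rL rM"
proof
  show "finite A" "finite B" using m_fin[OF mL] m_fin[OF mM] by auto
  show "A \<inter> B = {}" using TS gA gB unfolding two_sum_defined_def by auto
  show "g \<notin> A" "g \<notin> B" by fact+
  show "matroid (insert g A) rL" "matroid (insert g B) rM" by fact+
  show "rL {g} \<noteq> 0" "rM {g} \<noteq> 0" using TS unfolding two_sum_defined_def is_loop_def by auto
  have eA: "insert g A - {g} = A" and eB: "insert g B - {g} = B" using gA gB by auto
  have "rL A \<le> rL (insert g A)" by (rule m_mono[OF mL]) auto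
  then show "rL A = rL (insert g A)" using TS unfolding two_sum_defined_def is_coloop_def eA by auto
  have "rM B \<le> rM (insert g B)" by (rule m_mono[OF mM]) auto
  then show "rM B = rM (insert g B)" using TS unfolding two_sum_defined_def is_coloop_def eB by auto
qed

lemma gen:
  fixes A B :: "'a set" and rL rM :: "'a set \<Rightarrow> nat" and g :: 'a
  assumes TS: "two_sum_defined (insert g A) rL (insert g B) rM g" and gA: "g \<notin> A" and gB: "g \<notin> B"
  shows "(B_rayleigh (insert g A) rL \<and> B_rayleigh (insert g B) rM \<longrightarrow>
            B_rayleigh (two_sum_ground (insert g A) (insert g B) g) (two_sum_rank (insert g A) rL (insert g B) rM g))
       \<and> (I_rayleigh (insert g A) rL \<and> I_rayleigh (insert g B) rM \<longrightarrow>
            I_rayleigh (two_sum_ground (insert g A) (insert g B) g) (two_sum_rank (insert g A) rL (insert g B) rM g))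
       \<and> (S_rayleigh (insert g A) rL \<and> S_rayleigh (insert g B) rM \<longrightarrow>
            S_rayleigh (two_sum_ground (insert g A) (insert g B) g) (two_sum_rank (insert g A) rL (insert g B) rM g))
       \<and> (potts_rayleigh (insert g A) rL \<and> potts_rayleigh (insert g B) rM \<longrightarrow>
            potts_rayleigh (two_sum_ground (insert g A) (insert g B) g) (two_sum_rank (insert g A) rL (insert g B) rM g))"
proof (intro conjI impI)
  assume h: "B_rayleigh (insert g A) rL \<and> B_rayleigh (insert g B) rM"
  then interpret ts A B g rL rM using ts_of[OF TS gA gB] unfolding B_rayleigh_def by blast
  show "B_rayleigh (two_sum_ground (insert g A) (insert g B) g) (two_sum_rank (insert g A) rL (insert g B) rM g)"
    unfolding B_rayleigh_def using matroid_N B_ok h unfolding B_rayleigh_def ground by blast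
next
  assume h: "I_rayleigh (insert g A) rL \<and> I_rayleigh (insert g B) rM"
  then interpret ts A B g rL rM using ts_of[OF TS gA gB] unfolding I_rayleigh_def by blast
  show "I_rayleigh (two_sum_ground (insert g A) (insert g B) g) (two_sum_rank (insert g A) rL (insert g B) rM g)"
    unfolding I_rayleigh_def using matroid_N I_ok h unfolding I_rayleigh_def ground by blast
next
  assume h: "S_rayleigh (insert g A) rL \<and> S_rayleigh (insert g B) rM"
  then interpret ts A B g rL rM using ts_of[OF TS gA gB] unfolding S_rayleigh_def by blast
  show "S_rayleigh (two_sum_ground (insert g A) (insert g B) g) (two_sum_rank (insert g A) rL (insert g B) rM g)"
    unfolding S_rayleigh_def using matroid_N S_ok h unfolding S_rayleigh_def ground by blast
next
  assume h: "potts_rayleigh (insert g A) rL \<and> potts_rayleigh (insert g B) rM"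
  then interpret ts A B g rL rM using ts_of[OF TS gA gB] unfolding potts_rayleigh_def by blast
  obtain qL where qL: "qL > 0" "\<forall>q. 0 < q \<and> q \<le> qL \<longrightarrow> rayleigh (insert g A) (potts_coeff rL q)"
    using h unfolding potts_rayleigh_def by blast
  obtain qM where qM: "qM > 0" "\<forall>q. 0 < q \<and> q \<le> qM \<longrightarrow> rayleigh (insert g B) (potts_coeff rM q)"
    using h unfolding potts_rayleigh_def by blast
  define qs :: real where "qs = min (min qL qM) (1/2)"
  have "qs > 0" using qL qM unfolding qs_def by simp
  moreover have "\<forall>q. 0 < q \<and> q \<le> qs \<longrightarrow> rayleigh (A \<union> B) (potts_coeff N q)"
  proof (intro allI impI)
    fix q :: real assume q: "0 < q \<and> q \<le> qs"
    show "rayleigh (A \<union> B) (potts_coeff N q)"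
      by (rule P_ok) (use q qL qM in \<open>auto simp: qs_def\<close>)
  qed
  ultimately show "potts_rayleigh (two_sum_ground (insert g A) (insert g B) g) (two_sum_rank (insert g A) rL (insert g B) rM g)"
    unfolding potts_rayleigh_def ground using matroid_N[unfolded ground] by blast
qed

theorem theorem5p8:
  fixes EL EM :: "'a set" and rL rM :: "'a set \<Rightarrow> nat" and g :: 'a
  assumes "two_sum_defined EL rL EM rM g"
  shows "(B_rayleigh EL rL \<and> B_rayleigh EM rM \<longrightarrow>
            B_rayleigh (two_sum_ground EL EM g) (two_sum_rank EL rL EM rM g))
       \<and> (I_rayleigh EL rL \<and> I_rayleigh EM rM \<longrightarrow>
            I_rayleigh (two_sum_ground EL EM g) (two_sum_rank EL rL EM rM g))
       \<and> (S_rayleigh EL rL \<and> S_rayleigh EM rM \<longrightarrow>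
            S_rayleigh (two_sum_ground EL EM g) (two_sum_rank EL rL EM rM g))
       \<and> (potts_rayleigh EL rL \<and> potts_rayleigh EM rM \<longrightarrow>
            potts_rayleigh (two_sum_ground EL EM g) (two_sum_rank EL rL EM rM g))"
proof -
  have gEL: "g \<in> EL" and gEM: "g \<in> EM" using assms unfolding two_sum_defined_def by auto
  obtain A where A: "EL = insert g A" "g \<notin> A" using gEL by (intro that[of "EL - {g}"]) auto
  obtain B where B: "EM = insert g B" "g \<notin> B" using gEM by (intro that[of "EM - {g}"]) auto
  have TS: "two_sum_defined (insert g A) rL (insert g B) rM g" using assms unfolding A(1) B(1) .
  show ?thesis unfolding A(1) B(1) by (rule gen[OF TS A(2) B(2)])
qed


end
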